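(* Let $\widehat{V}_2(\mathbf{A};\mathbf{Y}) = \frac{\hat\sigma^2}{n}\Big[1+\frac1n\sum_{i=1}^n\sum_{j=1}^n\mathbf{A}_{ij}\Big]$. Under the asymptotic scaling assumption and the homoskedasticity assumption $\mathrm{var}(X_i)=\mathrm{var}(X_j)$ for all $i,j\in\mathcal{V}$, for every $\epsilon>0$, \[\lim_{n\to\infty}\Pr\big(n\,\mathrm{var}(\overline{X}) - n\widehat{V}_2(\mathbf{A}^\circ;\mathbf{Y})>\epsilon\big)=0.\]
   Context: Setting: $\mathcal{G}=(\mathcal{V},\mathcal{E})$ is a simple undirected graph with a real random variable $X_i$ attached to each vertex $i$. $\mathcal{G}$ is a dependency graph: for all disjoint $\mathcal{V}_1,\mathcal{V}_2\subset\mathcal{V}$ such that no edge of $\mathcal{E}$ joins a vertex of $\mathcal{V}_1$ to a vertex of $\mathcal{V}_2$, $\{X_i:i\in\mathcal{V}_1\}$ is independent of $\{X_j:j\in\mathcal{V}_2\}$. A subset $\mathcal{V}_S\subseteq\mathcal{V}$ with $|\mathcal{V}_S|=n$ is observed, labeled $1,\dots,n$. $\mathcal{G}_S=(\mathcal{V}_S,\mathcal{E}_S)$ is the induced subgraph on $\mathcal{V}_S$, with $n\times n$ adjacency matrix $\mathbf{A}^\circ$ (0-1, symmetric, zero diagonal). $\mathcal{G}_R=(\mathcal{V}_S,\mathcal{E}_R)$ is a subgraph with $\mathcal{E}_R\subseteq\mathcal{E}_S$; $d_i$ is the degree of $i\in\mathcal{V}_S$ in $\mathcal{G}$; $\mathbf{Y}=((X_1,\dots,X_n),(d_1,\dots,d_n),\mathcal{G}_R)$.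 Let $\mu=\frac1n\sum_{i=1}^n \mathrm{E}[X_i]$, $\overline{X}=\frac1n\sum_i X_i$, $\hat\sigma^2=\frac1n\sum_i(X_i-\overline{X})^2$. Asymptotic scaling assumption: a sequence, indexed by $n\to\infty$, of such settings (nested graphs with $|\mathcal{V}|=N_n\ge n$, $|\mathcal{V}_S|=n$), with finite positive constants $c_1,c_2,c_3$ independent of $n$ such that: $\Pr(|X_i-\mu|>c_1)=0$ for all $i\in\mathcal{V}_S$; $\sum_{j}\mathbf{A}^\circ_{ij}\le c_2$ for all $i\in\mathcal{V}_S$; and $\lim_{n\to\infty} n\,\mathrm{var}(\overline{X})=c_3$. *)

theory Defs
  imports "HOL-Probability.Probability"
begin

definition simple_graph :: "'v set \<Rightarrow> ('v \<Rightarrow> 'v \<Rightarrow> bool) \<Rightarrow> bool" where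
  "simple_graph V E \<longleftrightarrow> (\<forall>x y. E x y \<longrightarrow> x \<in> V \<and> y \<in> V \<and> x \<noteq> y \<and> E y x)"

definition dependency_graph ::
  "'a measure \<Rightarrow> 'v set \<Rightarrow> ('v \<Rightarrow> 'v \<Rightarrow> bool) \<Rightarrow> ('v \<Rightarrow> 'a \<Rightarrow> real) \<Rightarrow> bool" where
  "dependency_graph M V E X \<longleftrightarrow>
     (\<forall>V1 V2. V1 \<subseteq> V \<longrightarrow> V2 \<subseteq> V \<longrightarrow> V1 \<inter> V2 = {} \<longrightarrow>
        (\<forall>i\<in>V1. \<forall>j\<in>V2. \<not> E i j) \<longrightarrow>
        prob_space.indep_var M
          (PiM V1 (\<lambda>_. borel)) (\<lambda>\<omega>. restrict (\<lambda>i. X i \<omega>) V1)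
          (PiM V2 (\<lambda>_. borel)) (\<lambda>\<omega>. restrict (\<lambda>j. X j \<omega>) V2))"

definition expect :: "'a measure \<Rightarrow> ('a \<Rightarrow> real) \<Rightarrow> real" where
  "expect M Y = integral\<^sup>L M Y"

definition var :: "'a measure \<Rightarrow> ('a \<Rightarrow> real) \<Rightarrow> real" where
  "var M Y = integral\<^sup>L M (\<lambda>\<omega>. (Y \<omega> - expect M Y)\<^sup>2)"

(* adjacency matrix of the induced subgraph on the observed vertices,
   labelled 1..n via lab *)
definition adj :: "('v \<Rightarrow> 'v \<Rightarrow> bool) \<Rightarrow> (nat \<Rightarrow> 'v) \<Rightarrow> nat \<Rightarrow> nat \<Rightarrow> real" where
  "adj E lab i j = (if E (lab i) (lab j) then 1 else 0)"

definition Xbar :: "nat \<Rightarrow> (nat \<Rightarrow> 'v) \<Rightarrow> ('v \<Rightarrow> 'a \<Rightarrow> real) \<Rightarrow> 'a \<Rightarrow> real" where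
  "Xbar n lab X \<omega> = (\<Sum>i=1..n. X (lab i) \<omega>) / real n"

definition mu :: "'a measure \<Rightarrow> nat \<Rightarrow> (nat \<Rightarrow> 'v) \<Rightarrow> ('v \<Rightarrow> 'a \<Rightarrow> real) \<Rightarrow> real" where
  "mu M n lab X = (\<Sum>i=1..n. expect M (X (lab i))) / real n"

definition sigma_hat_sq :: "nat \<Rightarrow> (nat \<Rightarrow> 'v) \<Rightarrow> ('v \<Rightarrow> 'a \<Rightarrow> real) \<Rightarrow> 'a \<Rightarrow> real" where
  "sigma_hat_sq n lab X \<omega> = (\<Sum>i=1..n. (X (lab i) \<omega> - Xbar n lab X \<omega>)\<^sup>2) / real n"

definition V2_hat :: "nat \<Rightarrow> (nat \<Rightarrow> nat \<Rightarrow> real) \<Rightarrow> (nat \<Rightarrow> 'v) \<Rightarrow> ('v \<Rightarrow> 'a \<Rightarrow> real) \<Rightarrow> 'a \<Rightarrow> real" where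
  "V2_hat n A lab X \<omega> = sigma_hat_sq n lab X \<omega> / real n * (1 + (\<Sum>i=1..n. \<Sum>j=1..n. A i j) / real n)"

end

theory Submission
  imports Defs
begin


lemma (in prob_space) int_bound:
  fixes f :: "'a \<Rightarrow> real"
  assumes "AE \<omega> in M. \<bar>f \<omega>\<bar> \<le> B" "f \<in> borel_measurable M"
  shows "integrable M f"
  using assms by (intro integrable_const_bound[where B=B]) auto

lemma (in prob_space) abs_integral_le:
  fixes f :: "'a \<Rightarrow> real"
  assumes "AE \<omega> in M. \<bar>f \<omega>\<bar> \<le> B" "f \<in> borel_measurable M"
  shows "\<bar>integral\<^sup>L M f\<bar> \<le> B"
proof -
  have i: "integrable M f" using int_bound[OF assms] .
  have "\<bar>integral\<^sup>L M f\<bar> \<le> integral\<^sup>L M (\<lambda>\<omega>. \<bar>f \<omega>\<bar>)"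
    by (rule integral_abs_bound)
  also have "\<dots> \<le> integral\<^sup>L M (\<lambda>\<omega>. B)"
    using assms i by (intro integral_mono_AE) auto
  finally show ?thesis by (simp add: prob_space)
qed

lemma (in prob_space) int_bound_mult:
  fixes f g :: "'a \<Rightarrow> real"
  assumes "AE \<omega> in M. \<bar>f \<omega>\<bar> \<le> B1" "AE \<omega> in M. \<bar>g \<omega>\<bar> \<le> B2"
    "f \<in> borel_measurable M" "g \<in> borel_measurable M"
  shows "AE \<omega> in M. \<bar>f \<omega> * g \<omega>\<bar> \<le> B1 * B2"
  using assms(1,2) by eventually_elim (simp add: abs_mult mult_mono')

lemma indep_prod:
  fixes f g :: "real \<Rightarrow> real"
  assumes "prob_space M" "dependency_graph M V E X" "a \<in> V" "b \<in> V" "a \<noteq> b" "\<not> E a b"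
   "f \<in> borel_measurable borel" "g \<in> borel_measurable borel"
   "integrable M (\<lambda>\<omega>. f (X a \<omega>))" "integrable M (\<lambda>\<omega>. g (X b \<omega>))"
  shows "(\<integral>\<omega>. f (X a \<omega>) * g (X b \<omega>) \<partial>M) = (\<integral>\<omega>. f (X a \<omega>) \<partial>M) * (\<integral>\<omega>. g (X b \<omega>) \<partial>M)"
proof -
  interpret prob_space M by fact
  have "indep_var (PiM {a} (\<lambda>_. borel)) (\<lambda>\<omega>. restrict (\<lambda>i. X i \<omega>) {a})
          (PiM {b} (\<lambda>_. borel)) (\<lambda>\<omega>. restrict (\<lambda>j. X j \<omega>) {b})"
    using assms(2-6) unfolding dependency_graph_def by auto
  then have "indep_var borel ((\<lambda>x. f (x a)) \<circ> (\<lambda>\<omega>. restrict (\<lambda>i. X i \<omega>) {a}))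
       borel ((\<lambda>x. g (x b)) \<circ> (\<lambda>\<omega>. restrict (\<lambda>j. X j \<omega>) {b}))"
    by (rule indep_var_compose) (use assms(7,8) in measurable)
  then have "indep_var borel (\<lambda>\<omega>. f (X a \<omega>)) borel (\<lambda>\<omega>. g (X b \<omega>))"
    by (simp add: comp_def)
  then show ?thesis by (rule indep_var_lebesgue_integral) fact+
qed

lemma ab_le: fixes a b :: real shows "a*b \<le> (a\<^sup>2+b\<^sup>2)/2"
  using sum_squares_bound[of a b] by simp

lemma ab_le2: fixes a b :: real shows "a*b*2 \<le> a\<^sup>2+b\<^sup>2"
  using sum_squares_bound[of a b] by (simp add: algebra_simps)

lemma sq_le: fixes a c :: real shows "\<bar>a\<bar> \<le> c \<Longrightarrow> a\<^sup>2 \<le> c\<^sup>2"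
  by (metis abs_ge_zero order_trans power2_abs power_mono)

lemma sumsq_identity:
  fixes w :: "nat \<Rightarrow> real"
  assumes "finite I" "card I = n" "n > 0"
  shows "(\<Sum>i\<in>I. (w i - (\<Sum>j\<in>I. w j)/n)\<^sup>2)/n = (\<Sum>i\<in>I. (w i)\<^sup>2)/n - ((\<Sum>i\<in>I. w i)/n)\<^sup>2"
proof -
  define a where "a = (\<Sum>j\<in>I. w j)/n"
  have "(\<Sum>i\<in>I. (w i - a)\<^sup>2) = (\<Sum>i\<in>I. (w i)\<^sup>2 - 2*a*w i + a\<^sup>2)"
    by (intro sum.cong) (auto simp: power2_diff algebra_simps)
  also have "\<dots> = (\<Sum>i\<in>I. (w i)\<^sup>2) - 2*a*(\<Sum>i\<in>I. w i) + n*a\<^sup>2"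
    using assms by (simp add: sum.distrib sum_subtractf sum_distrib_left)
  also have "(\<Sum>i\<in>I. w i) = n*a" using assms by (simp add: a_def)
  finally show ?thesis using assms by (simp add: a_def field_simps power2_eq_square)
qed

lemma (in prob_space) sum_sq_bound:
  fixes U :: "nat \<Rightarrow> 'a \<Rightarrow> real" and b :: real and A :: "nat \<Rightarrow> nat \<Rightarrow> real"
  assumes fin: "finite I"
    and int: "\<And>i j. i\<in>I \<Longrightarrow> j\<in>I \<Longrightarrow> integrable M (\<lambda>\<omega>. U i \<omega> * U j \<omega>)"
    and le: "\<And>i j. i\<in>I \<Longrightarrow> j\<in>I \<Longrightarrow> integral\<^sup>L M (\<lambda>\<omega>. U i \<omega> * U j \<omega>) \<le> b * ((if i = j then 1 else 0) + A i j)"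
  shows "integrable M (\<lambda>\<omega>. (\<Sum>i\<in>I. U i \<omega>)\<^sup>2)"
    and "integral\<^sup>L M (\<lambda>\<omega>. (\<Sum>i\<in>I. U i \<omega>)\<^sup>2) \<le> b * (card I + (\<Sum>i\<in>I. \<Sum>j\<in>I. A i j))"
proof -
  have eq: "(\<lambda>\<omega>. (\<Sum>i\<in>I. U i \<omega>)\<^sup>2) = (\<lambda>\<omega>. \<Sum>i\<in>I. \<Sum>j\<in>I. U i \<omega> * U j \<omega>)"
    by (simp add: power2_eq_square sum_product)
  show "integrable M (\<lambda>\<omega>. (\<Sum>i\<in>I. U i \<omega>)\<^sup>2)"
    unfolding eq using int by (auto intro!: Bochner_Integration.integrable_sum)
  have "integral\<^sup>L M (\<lambda>\<omega>. (\<Sum>i\<in>I. U i \<omega>)\<^sup>2) = (\<Sum>i\<in>I. \<Sum>j\<in>I. integral\<^sup>L M (\<lambda>\<omega>. U i \<omega> * U j \<omega>))"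
    unfolding eq using int by (simp add: integral_sum Bochner_Integration.integrable_sum)
  also have "\<dots> \<le> (\<Sum>i\<in>I. \<Sum>j\<in>I. b * ((if i = j then 1 else 0) + A i j))"
    using le by (intro sum_mono) auto
  also have "\<dots> = b * (\<Sum>i\<in>I. \<Sum>j\<in>I. (if i = j then 1 else 0)) + b * (\<Sum>i\<in>I. \<Sum>j\<in>I. A i j)"
    by (simp add: sum_distrib_left sum.distrib algebra_simps)
  also have "(\<Sum>i\<in>I. \<Sum>j\<in>I. (if i = j then 1 else 0::real)) = card I"
    using fin by simp
  finally show "integral\<^sup>L M (\<lambda>\<omega>. (\<Sum>i\<in>I. U i \<omega>)\<^sup>2) \<le> b * (card I + (\<Sum>i\<in>I. \<Sum>j\<in>I. A i j))"
    by (simp add: algebra_simps)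
qed



lemma key:
  fixes M :: "'a measure" and V :: "'v set" and E :: "'v \<Rightarrow> 'v \<Rightarrow> bool"
    and X :: "'v \<Rightarrow> 'a \<Rightarrow> real" and lab :: "nat \<Rightarrow> 'v" and n :: nat
    and c1 c2 \<delta> :: real
  assumes prob: "prob_space M"
    and lab_inj: "inj_on lab {1..n}" and lab_in: "lab ` {1..n} \<subseteq> V"
    and meas: "\<And>i. i \<in> V \<Longrightarrow> X i \<in> borel_measurable M"
    and dep: "dependency_graph M V E X"
    and c1: "c1 > 0" and c2: "c2 > 0"
    and bounded: "\<And>i. i \<in> {1..n} \<Longrightarrow>
        measure M {\<omega> \<in> space M. \<bar>X (lab i) \<omega> - mu M n lab X\<bar> > c1} = 0"
    and degree: "\<And>i. i \<in> {1..n} \<Longrightarrow> (\<Sum>j=1..n. adj E lab i j) \<le> c2"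
    and homosk: "\<And>i j. i \<in> V \<Longrightarrow> j \<in> V \<Longrightarrow> var M (X i) = var M (X j)"
    and n: "n \<ge> 1" and \<delta>: "\<delta> > 0"
  shows "measure M {\<omega> \<in> space M. real n * var M (Xbar n lab X)
            - real n * V2_hat n (adj E lab) lab X \<omega> > \<delta> * (1 + c2)}
         \<le> 4 * c1^4 * (1 + c2) / (real n * \<delta>\<^sup>2) + 2 * var M (Xbar n lab X) / \<delta>"
proof -
  interpret prob_space M by (rule prob)
  define I where "I = {1..n}"
  have fin: "finite I" and cardI: "card I = n" and npos: "real n > 0"
    using n by (auto simp: I_def)
  define x where "x i = (if i \<in> I then X (lab i) else (\<lambda>_. 0))" for i
  have xI: "\<And>i. i \<in> I \<Longrightarrow> x i = X (lab i)" by (simp add: x_def)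
  have xm[measurable]: "x i \<in> borel_measurable M" for i
    using meas lab_in by (auto simp: x_def I_def image_subset_iff)
  define \<mu> where "\<mu> = mu M n lab X"
  define m where "m i = expect M (x i)" for i
  define w where "w i \<omega> = x i \<omega> - \<mu>" for i \<omega>
  define Z where "Z i \<omega> = x i \<omega> - m i" for i \<omega>
  define \<sigma>2 where "\<sigma>2 = var M (X (lab 1))"
  define A where "A = adj E lab"
  define S where "S = (\<Sum>i\<in>I. \<Sum>j\<in>I. A i j)"
  define K where "K = 1 + S / n"
  have w_eq: "w i = (\<lambda>\<omega>. x i \<omega> - \<mu>)" for i by (simp add: w_def fun_eq_iff)
  have Z_eq: "Z i = (\<lambda>\<omega>. x i \<omega> - m i)" for i by (simp add: Z_def fun_eq_iff)
  have wm[measurable]: "w i \<in> borel_measurable M" for i unfolding w_def by measurable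
  have Zm[measurable]: "Z i \<in> borel_measurable M" for i unfolding Z_def by measurable
  have A01: "A i j = 0 \<or> A i j = 1" for i j by (simp add: A_def adj_def)
  have A0: "A i j \<ge> 0" for i j by (simp add: A_def adj_def)
  have aw: "AE \<omega> in M. \<bar>w i \<omega>\<bar> \<le> c1" if i: "i \<in> I" for i
  proof -
    define N where "N = {\<omega> \<in> space M. \<bar>X (lab i) \<omega> - mu M n lab X\<bar> > c1}"
    have Xm[measurable]: "X (lab i) \<in> borel_measurable M"
      using xm[of i] xI[OF i] by simp
    have Nm: "N \<in> sets M" unfolding N_def \<mu>_def[symmetric] by measurable
    have "measure M N = 0" using bounded i by (simp add: N_def I_def)
    then have "N \<in> null_sets M" using Nm by (simp add: null_setsI emeasure_eq_measure)
    from AE_not_in[OF this] show ?thesis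
      using AE_space by eventually_elim (auto simp: N_def w_def xI[OF i] \<mu>_def)
  qed
  have ax: "AE \<omega> in M. \<bar>x i \<omega>\<bar> \<le> \<bar>\<mu>\<bar> + c1" if i: "i \<in> I" for i
    using aw[OF i] by eventually_elim (auto simp: w_def)
  have xint: "integrable M (x i)" if "i \<in> I" for i
    using int_bound[OF ax[OF that]] by simp
  have wint: "integral\<^sup>L M (w i) = m i - \<mu>" if "i \<in> I" for i
    using xint[OF that] by (simp add: w_eq m_def expect_def prob_space)
  have mb: "\<bar>m i - \<mu>\<bar> \<le> c1" if "i \<in> I" for i
    using abs_integral_le[OF aw[OF that]] wint[OF that] by simp
  have aZ: "AE \<omega> in M. \<bar>Z i \<omega>\<bar> \<le> 2 * c1" if i: "i \<in> I" for i
    using aw[OF i] by eventually_elim (insert mb[OF i], auto simp: w_eq Z_eq abs_le_iff)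
  have Zint: "integrable M (Z i)" if "i \<in> I" for i
    using int_bound[OF aZ[OF that]] by simp
  have EZ: "integral\<^sup>L M (Z i) = 0" if "i \<in> I" for i
    using xint[OF that] by (simp add: Z_eq m_def expect_def prob_space)
  have ZZint: "integrable M (\<lambda>\<omega>. Z i \<omega> * Z j \<omega>)" if "i \<in> I" "j \<in> I" for i j
    by (rule int_bound[OF int_bound_mult[OF aZ[OF that(1)] aZ[OF that(2)]]]) auto
  have varZ: "integral\<^sup>L M (\<lambda>\<omega>. (Z i \<omega>)\<^sup>2) = \<sigma>2" if i: "i \<in> I" for i
  proof -
    have "var M (X (lab i)) = \<sigma>2" unfolding \<sigma>2_def
      using homosk[of "lab i" "lab 1"] lab_in i n by (auto simp: I_def image_subset_iff)
    then show ?thesis by (simp add: var_def Z_def m_def xI[OF i])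
  qed
  have s0: "\<sigma>2 \<ge> 0"
  proof -
    have "1 \<in> I" using n by (simp add: I_def)
    then have "\<sigma>2 = integral\<^sup>L M (\<lambda>\<omega>. (Z 1 \<omega>)\<^sup>2)" using varZ by simp
    also have "\<dots> \<ge> 0" by (intro Bochner_Integration.integral_nonneg) simp
    finally show ?thesis .
  qed
  have cZ: "integral\<^sup>L M (\<lambda>\<omega>. Z i \<omega> * Z j \<omega>) \<le> \<sigma>2" if "i \<in> I" "j \<in> I" for i j
  proof -
    have sqi: "integrable M (\<lambda>\<omega>. (Z k \<omega>)\<^sup>2)" if "k \<in> I" for k
      using ZZint[OF that that] by (simp add: power2_eq_square)
    have "integral\<^sup>L M (\<lambda>\<omega>. Z i \<omega> * Z j \<omega>) \<le> integral\<^sup>L M (\<lambda>\<omega>. ((Z i \<omega>)\<^sup>2 + (Z j \<omega>)\<^sup>2) / 2)"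
      using ZZint[OF that] sqi that
      by (intro integral_mono) (auto intro: ab_le2)
    also have "\<dots> = \<sigma>2" using sqi that varZ by simp
    finally show ?thesis .
  qed
  have indZ: "integral\<^sup>L M (\<lambda>\<omega>. Z i \<omega> * Z j \<omega>) = 0"
    if ij: "i \<in> I" "j \<in> I" "i \<noteq> j" "A i j = 0" for i j
  proof -
    have neq: "lab i \<noteq> lab j" using inj_on_contraD[OF lab_inj ij(3)] ij(1,2) by (simp add: I_def)
    have nE: "\<not> E (lab i) (lab j)" using ij(4) unfolding A_def adj_def by (auto split: if_splits)
    have Va: "lab i \<in> V" and Vb: "lab j \<in> V" using lab_in ij by (auto simp: I_def image_subset_iff)
    have i1: "integrable M (\<lambda>\<omega>. X (lab i) \<omega> - m i)" using Zint[OF ij(1)] by (simp add: Z_eq xI[OF ij(1)])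
    have i2: "integrable M (\<lambda>\<omega>. X (lab j) \<omega> - m j)" using Zint[OF ij(2)] by (simp add: Z_eq xI[OF ij(2)])
    have f1: "(\<lambda>t::real. t - m i) \<in> borel_measurable borel" by simp
    have f2: "(\<lambda>t::real. t - m j) \<in> borel_measurable borel" by simp
    have "(\<integral>\<omega>. (X (lab i) \<omega> - m i) * (X (lab j) \<omega> - m j) \<partial>M)
       = (\<integral>\<omega>. X (lab i) \<omega> - m i \<partial>M) * (\<integral>\<omega>. X (lab j) \<omega> - m j \<partial>M)"
      using indep_prod[OF prob dep Va Vb neq nE f1 f2] i1 i2 by simp
    moreover have "(\<integral>\<omega>. X (lab i) \<omega> - m i \<partial>M) = 0" using EZ[OF ij(1)] by (simp add: Z_eq xI[OF ij(1)])
    ultimately show ?thesis by (simp add: Z_eq xI ij)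
  qed
  have sumZ: "integrable M (\<lambda>\<omega>. (\<Sum>i\<in>I. Z i \<omega>)\<^sup>2)"
    "integral\<^sup>L M (\<lambda>\<omega>. (\<Sum>i\<in>I. Z i \<omega>)\<^sup>2) \<le> \<sigma>2 * (card I + S)"
  proof -
    have le: "integral\<^sup>L M (\<lambda>\<omega>. Z i \<omega> * Z j \<omega>) \<le> \<sigma>2 * ((if i = j then 1 else 0) + A i j)"
      if "i \<in> I" "j \<in> I" for i j
    proof (cases "i = j")
      case True then show ?thesis using varZ[OF that(1)] A0[of i j] s0
        by (simp add: power2_eq_square distrib_left)
    next
      case False
      then show ?thesis using A01[of i j] cZ[OF that] indZ[OF that False] by auto
    qed
    show "integrable M (\<lambda>\<omega>. (\<Sum>i\<in>I. Z i \<omega>)\<^sup>2)"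
      by (rule sum_sq_bound(1)[OF fin ZZint le]) auto
    show "integral\<^sup>L M (\<lambda>\<omega>. (\<Sum>i\<in>I. Z i \<omega>)\<^sup>2) \<le> \<sigma>2 * (card I + S)"
      unfolding S_def by (rule sum_sq_bound(2)[OF fin ZZint le]) auto
  qed
  
  define Y where "Y i \<omega> = (w i \<omega>)\<^sup>2" for i \<omega>
  define e where "e i = integral\<^sup>L M (Y i)" for i
  define U where "U i \<omega> = Y i \<omega> - e i" for i \<omega>
  have Y_eq: "Y i = (\<lambda>\<omega>. (x i \<omega> - \<mu>)\<^sup>2)" for i by (simp add: Y_def w_eq fun_eq_iff)
  have U_eq: "U i = (\<lambda>\<omega>. Y i \<omega> - e i)" for i by (simp add: U_def fun_eq_iff)
  have Ym[measurable]: "Y i \<in> borel_measurable M" for i unfolding Y_eq by measurable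
  have Um[measurable]: "U i \<in> borel_measurable M" for i unfolding U_eq by measurable
  have aY: "AE \<omega> in M. 0 \<le> Y i \<omega> \<and> Y i \<omega> \<le> c1\<^sup>2" if i: "i \<in> I" for i
    using aw[OF i] by eventually_elim (auto simp: Y_def intro: sq_le)
  have aY': "AE \<omega> in M. \<bar>Y i \<omega>\<bar> \<le> c1\<^sup>2" if i: "i \<in> I" for i
    using aY[OF i] by eventually_elim auto
  have Yint: "integrable M (Y i)" if "i \<in> I" for i
    using int_bound[OF aY'[OF that]] by simp
  have e_le: "e i \<le> c1\<^sup>2" if "i \<in> I" for i
    using abs_integral_le[OF aY'[OF that]] by (simp add: e_def)
  have e_ge0: "e i \<ge> 0" if "i \<in> I" for i
    unfolding e_def Y_def by (intro Bochner_Integration.integral_nonneg) simp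
  have sqi: "integrable M (\<lambda>\<omega>. (Z k \<omega>)\<^sup>2)" if "k \<in> I" for k
    using ZZint[OF that that] by (simp add: power2_eq_square)
  have e_ge: "e i \<ge> \<sigma>2" if i: "i \<in> I" for i
  proof -
    have "Y i = (\<lambda>\<omega>. (Z i \<omega>)\<^sup>2 + (2*(m i - \<mu>)) * Z i \<omega> + (m i - \<mu>)\<^sup>2)"
      by (auto simp: fun_eq_iff Y_def w_eq Z_eq power2_eq_square algebra_simps)
    then have "e i = \<sigma>2 + (m i - \<mu>)\<^sup>2"
      using sqi[OF i] Zint[OF i] EZ[OF i] varZ[OF i] by (simp add: e_def prob_space)
    then show ?thesis by simp
  qed
  have aU: "AE \<omega> in M. \<bar>U i \<omega>\<bar> \<le> c1\<^sup>2" if i: "i \<in> I" for i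
    using aY[OF i] by eventually_elim (insert e_le[OF i] e_ge0[OF i], auto simp: U_def)
  have UUint: "integrable M (\<lambda>\<omega>. U i \<omega> * U j \<omega>)" if "i \<in> I" "j \<in> I" for i j
    by (rule int_bound[OF int_bound_mult[OF aU[OF that(1)] aU[OF that(2)]]]) auto
  have cU: "integral\<^sup>L M (\<lambda>\<omega>. U i \<omega> * U j \<omega>) \<le> c1^4" if "i \<in> I" "j \<in> I" for i j
  proof -
    have "\<bar>integral\<^sup>L M (\<lambda>\<omega>. U i \<omega> * U j \<omega>)\<bar> \<le> c1\<^sup>2 * c1\<^sup>2"
      by (rule abs_integral_le[OF int_bound_mult[OF aU[OF that(1)] aU[OF that(2)]]]) auto
    then show ?thesis by (simp add: power2_eq_square power4_eq_xxxx)
  qed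
  have EU: "integral\<^sup>L M (U i) = 0" if "i \<in> I" for i
    using Yint[OF that] by (simp add: U_eq e_def prob_space)
  have indU: "integral\<^sup>L M (\<lambda>\<omega>. U i \<omega> * U j \<omega>) = 0"
    if ij: "i \<in> I" "j \<in> I" "i \<noteq> j" "A i j = 0" for i j
  proof -
    have neq: "lab i \<noteq> lab j" using inj_on_contraD[OF lab_inj ij(3)] ij(1,2) by (simp add: I_def)
    have nE: "\<not> E (lab i) (lab j)" using ij(4) unfolding A_def adj_def by (auto split: if_splits)
    have Va: "lab i \<in> V" and Vb: "lab j \<in> V" using lab_in ij by (auto simp: I_def image_subset_iff)
    have ue: "U k = (\<lambda>\<omega>. (X (lab k) \<omega> - \<mu>)\<^sup>2 - e k)" if "k \<in> I" for k
      by (simp add: U_eq Y_eq xI[OF that])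
    have i1: "integrable M (\<lambda>\<omega>. (X (lab i) \<omega> - \<mu>)\<^sup>2 - e i)"
      using int_bound[OF aU[OF ij(1)] Um[of i]] unfolding ue[OF ij(1)] .
    have i2: "integrable M (\<lambda>\<omega>. (X (lab j) \<omega> - \<mu>)\<^sup>2 - e j)"
      using int_bound[OF aU[OF ij(2)] Um[of j]] unfolding ue[OF ij(2)] .
    have f1: "(\<lambda>t::real. (t - \<mu>)\<^sup>2 - e i) \<in> borel_measurable borel" by simp
    have f2: "(\<lambda>t::real. (t - \<mu>)\<^sup>2 - e j) \<in> borel_measurable borel" by simp
    have "(\<integral>\<omega>. ((X (lab i) \<omega> - \<mu>)\<^sup>2 - e i) * ((X (lab j) \<omega> - \<mu>)\<^sup>2 - e j) \<partial>M)
       = (\<integral>\<omega>. (X (lab i) \<omega> - \<mu>)\<^sup>2 - e i \<partial>M) * (\<integral>\<omega>. (X (lab j) \<omega> - \<mu>)\<^sup>2 - e j \<partial>M)"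
      using indep_prod[OF prob dep Va Vb neq nE f1 f2] i1 i2 by simp
    moreover have "(\<integral>\<omega>. (X (lab i) \<omega> - \<mu>)\<^sup>2 - e i \<partial>M) = 0" using EU[OF ij(1)] by (simp add: ue[OF ij(1)])
    ultimately show ?thesis by (simp add: ue ij)
  qed
  define T where "T \<omega> = (\<Sum>i\<in>I. U i \<omega>)" for \<omega>
  have Tm[measurable]: "T \<in> borel_measurable M" unfolding T_def[abs_def] by measurable
  have sumU: "integrable M (\<lambda>\<omega>. (T \<omega>)\<^sup>2)"
    "integral\<^sup>L M (\<lambda>\<omega>. (T \<omega>)\<^sup>2) \<le> c1^4 * (card I + S)"
  proof -
    have le: "integral\<^sup>L M (\<lambda>\<omega>. U i \<omega> * U j \<omega>) \<le> c1^4 * ((if i = j then 1 else 0) + A i j)"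
      if "i \<in> I" "j \<in> I" for i j
    proof (cases "i = j")
      case True
      have "c1^4 * A i j \<ge> 0" using A0[of i j] c1 by simp
      with True show ?thesis using cU[OF that]
        by (simp add: distrib_left)
    next
      case False
      then show ?thesis using A01[of i j] cU[OF that] indU[OF that False] by auto
    qed
    show "integrable M (\<lambda>\<omega>. (T \<omega>)\<^sup>2)"
      unfolding T_def by (rule sum_sq_bound(1)[OF fin UUint le]) auto
    show "integral\<^sup>L M (\<lambda>\<omega>. (T \<omega>)\<^sup>2) \<le> c1^4 * (card I + S)"
      unfolding S_def T_def by (rule sum_sq_bound(2)[OF fin UUint le]) auto
  qed
  have S0: "S \<ge> 0" unfolding S_def using A0 by (simp add: sum_nonneg)
  have Sle: "S \<le> n * c2"
  proof -
    have "S \<le> (\<Sum>i\<in>I. c2)" unfolding S_def using degree by (intro sum_mono) (simp add: A_def I_def)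
    then show ?thesis using cardI by simp
  qed
  have K1: "K \<ge> 1" using S0 npos by (simp add: K_def)
  have Kc: "K \<le> 1 + c2" using Sle npos by (simp add: K_def divide_le_eq mult.commute)
  define a where "a \<omega> = (\<Sum>i\<in>I. Z i \<omega>)/n" for \<omega>
  have am[measurable]: "a \<in> borel_measurable M" unfolding a_def[abs_def] by measurable
  have sx: "(\<Sum>i\<in>I. x i \<omega>) = (\<Sum>i=1..n. X (lab i) \<omega>)" for \<omega>
    unfolding I_def by (rule sum.cong) (auto simp: x_def I_def)
  have Xb: "Xbar n lab X \<omega> = (\<Sum>i\<in>I. x i \<omega>)/n" for \<omega>
    by (simp add: Xbar_def sx)
  have sm: "(\<Sum>i\<in>I. m i) = (\<Sum>i=1..n. expect M (X (lab i)))"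
    unfolding I_def by (rule sum.cong) (auto simp: m_def x_def I_def)
  have mu_eq: "\<mu> = (\<Sum>i\<in>I. m i)/n" by (simp add: \<mu>_def mu_def sm)
  have Xb_fun: "Xbar n lab X = (\<lambda>\<omega>. (\<Sum>i\<in>I. x i \<omega>)/n)" using Xb by (simp add: fun_eq_iff)
  have EXb: "expect M (Xbar n lab X) = \<mu>"
    unfolding Xb_fun mu_eq expect_def using xint by (simp add: m_def expect_def integral_sum)
  have Xa: "Xbar n lab X \<omega> - \<mu> = a \<omega>" for \<omega>
    by (simp add: Xb mu_eq a_def Z_eq sum_subtractf diff_divide_distrib)
  have varX: "var M (Xbar n lab X) = integral\<^sup>L M (\<lambda>\<omega>. (a \<omega>)\<^sup>2)"
    unfolding var_def EXb using Xa by simp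
  have aint: "integrable M (\<lambda>\<omega>. (a \<omega>)\<^sup>2)"
    using sumZ(1) by (simp add: a_def power_divide)
  have varX2: "var M (Xbar n lab X) = integral\<^sup>L M (\<lambda>\<omega>. (\<Sum>i\<in>I. Z i \<omega>)\<^sup>2) / (real n)\<^sup>2"
    unfolding varX by (simp add: a_def power_divide)
  have nvar: "real n * var M (Xbar n lab X) \<le> \<sigma>2 * K"
  proof -
    have "real n * var M (Xbar n lab X) = integral\<^sup>L M (\<lambda>\<omega>. (\<Sum>i\<in>I. Z i \<omega>)\<^sup>2) / real n"
      unfolding varX2 using npos by (simp add: power2_eq_square)
    also have "\<dots> \<le> \<sigma>2 * (n + S) / real n"
      using sumZ(2) cardI npos by (simp add: divide_right_mono)
    also have "\<dots> = \<sigma>2 * K" using npos by (simp add: K_def field_simps)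
    finally show ?thesis .
  qed
  have n0: "n > 0" using n by simp
  have sh: "sigma_hat_sq n lab X \<omega> = (\<Sum>i\<in>I. Y i \<omega>)/n - (a \<omega>)\<^sup>2" for \<omega>
  proof -
    have wsum: "(\<Sum>j\<in>I. w j \<omega>)/n = a \<omega>"
      using cardI npos by (simp add: w_eq sum_subtractf Xa[symmetric] Xb diff_divide_distrib)
    have "(\<Sum>i=1..n. (X (lab i) \<omega> - Xbar n lab X \<omega>)\<^sup>2) = (\<Sum>i\<in>I. (w i \<omega> - (\<Sum>j\<in>I. w j \<omega>)/n)\<^sup>2)"
      unfolding wsum Xa[symmetric] unfolding I_def by (rule sum.cong) (auto simp: w_eq x_def I_def)
    then have "sigma_hat_sq n lab X \<omega> = (\<Sum>i\<in>I. (w i \<omega> - (\<Sum>j\<in>I. w j \<omega>)/n)\<^sup>2)/n"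
      by (simp add: sigma_hat_sq_def)
    also have "\<dots> = (\<Sum>i\<in>I. (w i \<omega>)\<^sup>2)/n - ((\<Sum>i\<in>I. w i \<omega>)/n)\<^sup>2"
      by (rule sumsq_identity[OF fin cardI n0])
    finally show ?thesis using wsum by (simp add: Y_def)
  qed
  have SS: "(\<Sum>i=1..n. \<Sum>j=1..n. adj E lab i j) = S" by (simp add: S_def A_def I_def)
  have nV2: "real n * V2_hat n (adj E lab) lab X \<omega> = sigma_hat_sq n lab X \<omega> * K" for \<omega>
    unfolding V2_hat_def SS using npos by (simp add: K_def)
  have Ysum: "(\<Sum>i\<in>I. Y i \<omega>) = (\<Sum>i\<in>I. e i) + T \<omega>" for \<omega>
    by (simp add: T_def U_def sum_subtractf)
  have esum: "(\<Sum>i\<in>I. e i) \<ge> n * \<sigma>2"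
  proof -
    have "(\<Sum>i\<in>I. \<sigma>2) \<le> (\<Sum>i\<in>I. e i)" using e_ge by (intro sum_mono) auto
    then show ?thesis using cardI by simp
  qed
  have sub: "{\<omega> \<in> space M. real n * var M (Xbar n lab X)
            - real n * V2_hat n (adj E lab) lab X \<omega> > \<delta> * (1 + c2)}
     \<subseteq> {\<omega> \<in> space M. (real n * \<delta> / 2)\<^sup>2 \<le> (T \<omega>)\<^sup>2} \<union> {\<omega> \<in> space M. \<delta> / 2 \<le> (a \<omega>)\<^sup>2}"
  proof
    fix \<omega> assume "\<omega> \<in> {\<omega> \<in> space M. real n * var M (Xbar n lab X)
            - real n * V2_hat n (adj E lab) lab X \<omega> > \<delta> * (1 + c2)}"
    then have sp: "\<omega> \<in> space M" and gt: "real n * var M (Xbar n lab X)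
            - real n * V2_hat n (adj E lab) lab X \<omega> > \<delta> * (1 + c2)" by auto
    define sg where "sg = sigma_hat_sq n lab X \<omega>"
    have g1: "(\<sigma>2 - sg) * K > \<delta> * (1 + c2)"
      using gt nvar nV2[of \<omega>] by (simp add: sg_def algebra_simps)
    have "\<delta> * K \<le> \<delta> * (1 + c2)" using Kc \<delta> by simp
    have g2: "\<sigma>2 - sg > \<delta>"
    proof (rule ccontr)
      assume "\<not> \<sigma>2 - sg > \<delta>"
      then have "(\<sigma>2 - sg) * K \<le> \<delta> * K" using K1 by (intro mult_right_mono) auto
      with g1 \<open>\<delta> * K \<le> \<delta> * (1 + c2)\<close> show False by linarith
    qed
    have "sg = ((\<Sum>i\<in>I. e i) + T \<omega>)/n - (a \<omega>)\<^sup>2" by (simp add: sg_def sh Ysum)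
    moreover have "((\<Sum>i\<in>I. e i) + T \<omega>)/n \<ge> (n * \<sigma>2 + T \<omega>)/n"
      using esum npos by (simp add: divide_right_mono)
    moreover have "(n * \<sigma>2 + T \<omega>)/n = \<sigma>2 + T \<omega> / n" using npos by (simp add: field_simps)
    ultimately have g3: "- (T \<omega> / n) + (a \<omega>)\<^sup>2 > \<delta>" using g2 by linarith
    show "\<omega> \<in> {\<omega> \<in> space M. (real n * \<delta> / 2)\<^sup>2 \<le> (T \<omega>)\<^sup>2} \<union> {\<omega> \<in> space M. \<delta> / 2 \<le> (a \<omega>)\<^sup>2}"
    proof (cases "\<delta> / 2 \<le> (a \<omega>)\<^sup>2")
      case True then show ?thesis using sp by simp
    next
      case False
      then have "- (T \<omega> / n) > \<delta> / 2" using g3 by linarith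
      then have "- T \<omega> > real n * \<delta> / 2" using npos by (simp add: field_simps)
      then have "(real n * \<delta> / 2)\<^sup>2 \<le> (- T \<omega>)\<^sup>2" using npos \<delta>
        by (intro power_mono) auto
      then show ?thesis using sp by simp
    qed
  qed
  have m1: "measure M {\<omega> \<in> space M. (real n * \<delta> / 2)\<^sup>2 \<le> (T \<omega>)\<^sup>2}
      \<le> integral\<^sup>L M (\<lambda>\<omega>. (T \<omega>)\<^sup>2) / (real n * \<delta> / 2)\<^sup>2"
    by (rule integral_Markov_inequality_measure[where A="space M", OF sumU(1)]) (use npos \<delta> in auto)
  have m2: "measure M {\<omega> \<in> space M. \<delta> / 2 \<le> (a \<omega>)\<^sup>2}
      \<le> integral\<^sup>L M (\<lambda>\<omega>. (a \<omega>)\<^sup>2) / (\<delta> / 2)"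
    by (rule integral_Markov_inequality_measure[where A="space M", OF aint]) (use \<delta> in auto)
  have b1: "integral\<^sup>L M (\<lambda>\<omega>. (T \<omega>)\<^sup>2) / (real n * \<delta> / 2)\<^sup>2 \<le> 4 * c1^4 * (1 + c2) / (real n * \<delta>\<^sup>2)"
  proof -
    have "integral\<^sup>L M (\<lambda>\<omega>. (T \<omega>)\<^sup>2) \<le> c1^4 * (n * (1 + c2))"
      using sumU(2) cardI Sle c1 by (smt (verit) distrib_left mult_left_mono mult.commute zero_le_power mult_cancel_left1)
    then have "integral\<^sup>L M (\<lambda>\<omega>. (T \<omega>)\<^sup>2) / (real n * \<delta> / 2)\<^sup>2 \<le> c1^4 * (n * (1 + c2)) / (real n * \<delta> / 2)\<^sup>2"
      by (simp add: divide_right_mono)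
    also have "\<dots> = 4 * c1^4 * (1 + c2) / (real n * \<delta>\<^sup>2)"
      using npos \<delta> by (simp add: field_simps power2_eq_square)
    finally show ?thesis .
  qed
  have "measure M {\<omega> \<in> space M. real n * var M (Xbar n lab X)
            - real n * V2_hat n (adj E lab) lab X \<omega> > \<delta> * (1 + c2)}
     \<le> measure M ({\<omega> \<in> space M. (real n * \<delta> / 2)\<^sup>2 \<le> (T \<omega>)\<^sup>2} \<union> {\<omega> \<in> space M. \<delta> / 2 \<le> (a \<omega>)\<^sup>2})"
    by (rule finite_measure_mono[OF sub]) measurable
  also have "\<dots> \<le> measure M {\<omega> \<in> space M. (real n * \<delta> / 2)\<^sup>2 \<le> (T \<omega>)\<^sup>2} + measure M {\<omega> \<in> space M. \<delta> / 2 \<le> (a \<omega>)\<^sup>2}"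
    by (rule measure_Un_le) measurable
  also have "\<dots> \<le> 4 * c1^4 * (1 + c2) / (real n * \<delta>\<^sup>2) + 2 * var M (Xbar n lab X) / \<delta>"
    using m1 m2 b1 varX by (simp add: field_simps)
  finally show ?thesis .
qed



theorem proposition2:
  fixes M :: "nat \<Rightarrow> 'a measure"
    and V :: "nat \<Rightarrow> 'v set"
    and E :: "nat \<Rightarrow> 'v \<Rightarrow> 'v \<Rightarrow> bool"
    and X :: "nat \<Rightarrow> 'v \<Rightarrow> 'a \<Rightarrow> real"
    and lab :: "nat \<Rightarrow> nat \<Rightarrow> 'v"
    and c1 c2 c3 :: real
  assumes prob: "\<And>n. prob_space (M n)"
    and graph: "\<And>n. simple_graph (V n) (E n)"
    and finV: "\<And>n. finite (V n)"
    and cardV: "\<And>n. n \<le> card (V n)"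
    and lab_inj: "\<And>n. inj_on (lab n) {1..n}"
    and lab_in: "\<And>n. lab n ` {1..n} \<subseteq> V n"
    and meas: "\<And>n i. i \<in> V n \<Longrightarrow> X n i \<in> borel_measurable (M n)"
    and dep: "\<And>n. dependency_graph (M n) (V n) (E n) (X n)"
    and c_pos: "c1 > 0" "c2 > 0" "c3 > 0"
    and bounded: "\<And>n i. i \<in> {1..n} \<Longrightarrow>
        measure (M n) {\<omega> \<in> space (M n).
           \<bar>X n (lab n i) \<omega> - mu (M n) n (lab n) (X n)\<bar> > c1} = 0"
    and degree: "\<And>n i. i \<in> {1..n} \<Longrightarrow> (\<Sum>j=1..n. adj (E n) (lab n) i j) \<le> c2"
    and var_lim: "(\<lambda>n. real n * var (M n) (Xbar n (lab n) (X n))) \<longlonglongrightarrow> c3"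
    and homosk: "\<And>n i j. i \<in> V n \<Longrightarrow> j \<in> V n \<Longrightarrow> var (M n) (X n i) = var (M n) (X n j)"
  shows "\<forall>\<epsilon>>0. (\<lambda>n. measure (M n) {\<omega> \<in> space (M n).
            real n * var (M n) (Xbar n (lab n) (X n))
            - real n * V2_hat n (adj (E n) (lab n)) (lab n) (X n) \<omega> > \<epsilon>}) \<longlonglongrightarrow> 0"
proof (intro allI impI)
  fix \<epsilon> :: real assume \<epsilon>: "\<epsilon> > 0"
  define \<delta> where "\<delta> = \<epsilon> / (1 + c2)"
  have \<delta>: "\<delta> > 0" using \<epsilon> c_pos by (simp add: \<delta>_def)
  have \<delta>e: "\<delta> * (1 + c2) = \<epsilon>" using c_pos by (simp add: \<delta>_def)
  define g where "g n = 4 * c1^4 * (1 + c2) / (real n * \<delta>\<^sup>2) + 2 * var (M n) (Xbar n (lab n) (X n)) / \<delta>" for n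
  have bound: "measure (M n) {\<omega> \<in> space (M n).
            real n * var (M n) (Xbar n (lab n) (X n))
            - real n * V2_hat n (adj (E n) (lab n)) (lab n) (X n) \<omega> > \<epsilon>} \<le> g n" if n: "n \<ge> 1" for n
    using key[OF prob lab_inj lab_in meas dep c_pos(1,2) bounded degree homosk n \<delta>]
    unfolding \<delta>e g_def by simp
  have l1: "(\<lambda>n. (4 * c1^4 * (1 + c2) / \<delta>\<^sup>2) / real n) \<longlonglongrightarrow> 0"
    by (rule lim_const_over_n)
  have l2: "(\<lambda>n. (2 / \<delta>) * ((real n * var (M n) (Xbar n (lab n) (X n))) * (1 / real n))) \<longlonglongrightarrow> (2/\<delta>) * (c3 * 0)"
    by (intro tendsto_mult tendsto_const var_lim lim_inverse_n')
  have "(\<lambda>n. (4 * c1^4 * (1 + c2) / \<delta>\<^sup>2) / real n + (2 / \<delta>) * ((real n * var (M n) (Xbar n (lab n) (X n))) * (1 / real n))) \<longlonglongrightarrow> 0 + (2/\<delta>) * (c3 * 0)"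
    by (rule tendsto_add[OF l1 l2])
  then have "(\<lambda>n. (4 * c1^4 * (1 + c2) / \<delta>\<^sup>2) / real n + (2 / \<delta>) * ((real n * var (M n) (Xbar n (lab n) (X n))) * (1 / real n))) \<longlonglongrightarrow> 0"
    by simp
  moreover have "eventually (\<lambda>n. (4 * c1^4 * (1 + c2) / \<delta>\<^sup>2) / real n + (2 / \<delta>) * ((real n * var (M n) (Xbar n (lab n) (X n))) * (1 / real n)) = g n) sequentially"
    using eventually_ge_at_top[of "1::nat"]
    by eventually_elim (use \<delta> in \<open>auto simp: g_def field_simps\<close>)
  ultimately have gl: "g \<longlonglongrightarrow> 0" by (rule Lim_transform_eventually)
  show "(\<lambda>n. measure (M n) {\<omega> \<in> space (M n).
            real n * var (M n) (Xbar n (lab n) (X n))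
            - real n * V2_hat n (adj (E n) (lab n)) (lab n) (X n) \<omega> > \<epsilon>}) \<longlonglongrightarrow> 0"
  proof (rule tendsto_sandwich[OF _ _ tendsto_const gl])
    show "\<forall>\<^sub>F n in sequentially. 0 \<le> measure (M n) {\<omega> \<in> space (M n).
            real n * var (M n) (Xbar n (lab n) (X n))
            - real n * V2_hat n (adj (E n) (lab n)) (lab n) (X n) \<omega> > \<epsilon>}" by simp
    show "\<forall>\<^sub>F n in sequentially. measure (M n) {\<omega> \<in> space (M n).
            real n * var (M n) (Xbar n (lab n) (X n))
            - real n * V2_hat n (adj (E n) (lab n)) (lab n) (X n) \<omega> > \<epsilon>} \<le> g n"
      using eventually_ge_at_top[of "1::nat"] by eventually_elim (rule bound)
  qed
qed

end
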